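(* Let $\langle L,\leq\rangle$, $\langle K,\leq\rangle$ be complete lattices and $f:L\to K$ a surjective lattice morphism. Let $O:L\to L$ be an operator and $A:L^2\to L^2$ an approximator of $O$ such that both $O$ and $A$ respect $f$, and let $A_f$ be the projection of $A$ on $K$. If $(x',y')$ is an $A$-refinement of $(x,y)$, then $(f(x'),f(y'))$ is an $A_f$-refinement of $(f(x),f(y))$.
   Context: A lattice morphism satisfies $f(\bigvee X)=\bigvee f(X)$, $f(\bigwedge X)=\bigwedge f(X)$ for all $X\subseteq L$. $L^2$ has precision order $(x,y)\leq_p(u,v)$ iff $x\leq u,v\leq y$; $(x,y)_1=x,(x,y)_2=y$. An approximator of $O$ is a $\leq_p$-monotone $A$ with $A(x,x)_1\leq O(x)\leq A(x,x)_2$, assumed symmetric ($A(x,y)_1=A(y,x)_2$). $O$ respects $f$ if $f(x)=f(y)$ implies $f(O(x))=f(O(y))$. With $f^2(x,y)=(f(x),f(y))$, $A$ respects $f$ if $f^2(p)=f^2(q)$ implies $f^2(A(p))=f^2(A(q))$; $A_f$ is the unique operator on $K^2$ with $A_f\circ f^2=f^2\circ A$. For an operator $B$ on a bilattice $M^2$, a $B$-refinement of $(x,y)$ is a pair $(x',y')$ with either $(x,y)\leq_p(x',y')\leq_p B(x,y)$, or $x'=x$ and $B(x,y')_2\leq y'\leq y$. *)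

theory Defs
  imports Main
begin

definition lattice_morphism :: "('a::complete_lattice \<Rightarrow> 'b::complete_lattice) \<Rightarrow> bool" where
  "lattice_morphism f \<longleftrightarrow> (\<forall>X. f (Sup X) = Sup (f ` X) \<and> f (Inf X) = Inf (f ` X))"

definition leq_p :: "'a::complete_lattice \<times> 'a \<Rightarrow> 'a \<times> 'a \<Rightarrow> bool" where
  "leq_p p q \<longleftrightarrow> fst p \<le> fst q \<and> snd q \<le> snd p"

definition approximator ::
  "('a::complete_lattice \<times> 'a \<Rightarrow> 'a \<times> 'a) \<Rightarrow> ('a \<Rightarrow> 'a) \<Rightarrow> bool" where
  "approximator A Op \<longleftrightarrow>
     (\<forall>p q. leq_p p q \<longrightarrow> leq_p (A p) (A q)) \<and>
     (\<forall>x. fst (A (x, x)) \<le> Op x \<and> Op x \<le> snd (A (x, x)))"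

definition symmetric_approx :: "('a \<times> 'a \<Rightarrow> 'a \<times> 'a) \<Rightarrow> bool" where
  "symmetric_approx A \<longleftrightarrow> (\<forall>x y. fst (A (x, y)) = snd (A (y, x)))"

definition sq :: "('a \<Rightarrow> 'b) \<Rightarrow> 'a \<times> 'a \<Rightarrow> 'b \<times> 'b" where
  "sq f p = (f (fst p), f (snd p))"

definition op_respects :: "('a \<Rightarrow> 'a) \<Rightarrow> ('a \<Rightarrow> 'b) \<Rightarrow> bool" where
  "op_respects Op f \<longleftrightarrow> (\<forall>x y. f x = f y \<longrightarrow> f (Op x) = f (Op y))"

definition approx_respects :: "('a \<times> 'a \<Rightarrow> 'a \<times> 'a) \<Rightarrow> ('a \<Rightarrow> 'b) \<Rightarrow> bool" where
  "approx_respects A f \<longleftrightarrow> (\<forall>p q. sq f p = sq f q \<longrightarrow> sq f (A p) = sq f (A q))"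

text \<open>Projection A_f: the operator on K^2 with A_f o f^2 = f^2 o A
  (well defined and unique when f is surjective and A respects f).\<close>
definition proj_approx :: "('a \<times> 'a \<Rightarrow> 'a \<times> 'a) \<Rightarrow> ('a \<Rightarrow> 'b) \<Rightarrow> 'b \<times> 'b \<Rightarrow> 'b \<times> 'b" where
  "proj_approx A f = (THE B. \<forall>p. B (sq f p) = sq f (A p))"

definition refinement :: "('a::complete_lattice \<times> 'a \<Rightarrow> 'a \<times> 'a) \<Rightarrow> 'a \<times> 'a \<Rightarrow> 'a \<times> 'a \<Rightarrow> bool" where
  "refinement B p p' \<longleftrightarrow>
     (leq_p p p' \<and> leq_p p' (B p)) \<or>
     (fst p' = fst p \<and> snd (B (fst p, snd p')) \<le> snd p' \<and> snd p' \<le> snd p)"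

end

theory Submission
  imports Defs
begin

lemma lm_mono:
  assumes "lattice_morphism f" "a \<le> b" shows "f a \<le> f b"
proof -
  have "f (Sup {a,b}) = Sup (f ` {a,b})" using assms(1) unfolding lattice_morphism_def by blast
  moreover have "Sup {a,b} = b" using assms(2) by (simp add: sup_absorb2)
  ultimately have "f b = sup (f a) (f b)" by simp
  thus ?thesis by (metis sup.absorb_iff2)
qed

lemma proj_eq:
  assumes "surj f" "approx_respects A f"
  shows "proj_approx A f (sq f p) = sq f (A p)"
proof -
  define B where "B q = sq f (A (SOME p. sq f p = q))" for q
  have ex: "\<exists>p. sq f p = q" for q
  proof -
    obtain a where "f a = fst q" using assms(1) by (metis surjD)
    moreover obtain b where "f b = snd q" using assms(1) by (metis surjD)
    ultimately show ?thesis by (intro exI[of _ "(a,b)"]) (simp add: sq_def)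
  qed
  have hB: "\<forall>p. B (sq f p) = sq f (A p)"
  proof
    fix p
    have "sq f (SOME p'. sq f p' = sq f p) = sq f p" by (rule someI_ex) blast
    thus "B (sq f p) = sq f (A p)" using assms(2) unfolding B_def approx_respects_def by blast
  qed
  have "(THE B. \<forall>p. B (sq f p) = sq f (A p)) = B"
  proof (rule the_equality)
    show "\<forall>p. B (sq f p) = sq f (A p)" by (rule hB)
  next
    fix C assume hC: "\<forall>p. C (sq f p) = sq f (A p)"
    show "C = B"
    proof
      fix q obtain p where "sq f p = q" using ex by blast
      thus "C q = B q" using hB hC by metis
    qed
  qed
  thus ?thesis unfolding proj_approx_def using hB by metis
qed

theorem propositionA1:
  fixes f :: "'a::complete_lattice \<Rightarrow> 'b::complete_lattice"
    and Op :: "'a \<Rightarrow> 'a"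
    and A :: "'a \<times> 'a \<Rightarrow> 'a \<times> 'a"
    and x y x' y' :: 'a
  assumes "lattice_morphism f"
    and "surj f"
    and "approximator A Op"
    and "symmetric_approx A"
    and "op_respects Op f"
    and "approx_respects A f"
    and "refinement A (x, y) (x', y')"
  shows "refinement (proj_approx A f) (f x, f y) (f x', f y')"
proof -
  have P: "proj_approx A f (f a, f b) = (f (fst (A (a,b))), f (snd (A (a,b))))" for a b
    using proj_eq[OF assms(2) assms(6), of "(a,b)"] by (simp add: sq_def)
  note M = lm_mono[OF assms(1)]
  from assms(7) show ?thesis
    unfolding refinement_def leq_p_def
    by (auto simp: P intro: M)
qed

end
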